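(* Let $X=Y\cup Z$ where $Y\cap Z=\emptyset$, $Z$ is a $\sigma$-compact subspace of $X$ and $Y$ is a closed discrete subset of $X$. If $X$ is absolutely strongly star-Lindelöf and $|Y|<\mathfrak{d}$, then $X$ is selectively strongly star-Menger.
   Context: All spaces are regular. $St(A,\mathcal{U})=\bigcup\{U\in\mathcal{U}:U\cap A\neq\emptyset\}$. $\mathfrak{d}$ is the dominating number. $X$ is absolutely strongly star-Lindelöf if for every open cover $\mathcal{U}$ and every dense $D\subseteq X$ there is a countable $C\subseteq D$ with $St(C,\mathcal{U})=X$. $X$ is selectively strongly star-Menger if for every sequence $(\mathcal{U}_n:n\in\omega)$ of open covers and every sequence $(D_n:n\in\omega)$ of dense subsets there are finite $F_n\subseteq D_n$ with $\{St(F_n,\mathcal{U}_n):n\in\omega\}$ covering $X$. *)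

theory Defs
  imports "HOL-Analysis.Analysis" "HOL-Library.Equipollence"
begin

definition star :: "'a set \<Rightarrow> 'a set set \<Rightarrow> 'a set" where
  "star A \<U> = \<Union>{U \<in> \<U>. U \<inter> A \<noteq> {}}"

definition open_cover :: "'a topology \<Rightarrow> 'a set set \<Rightarrow> bool" where
  "open_cover X \<U> \<longleftrightarrow> (\<forall>U\<in>\<U>. openin X U) \<and> \<Union>\<U> = topspace X"

definition dense_in :: "'a topology \<Rightarrow> 'a set \<Rightarrow> bool" where
  "dense_in X D \<longleftrightarrow> D \<subseteq> topspace X \<and> X closure_of D = topspace X"

definition absolutely_strongly_star_Lindelof :: "'a topology \<Rightarrow> bool" where
  "absolutely_strongly_star_Lindelof X \<longleftrightarrow>
     (\<forall>\<U> D. open_cover X \<U> \<and> dense_in X D \<longrightarrow>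
        (\<exists>C. C \<subseteq> D \<and> countable C \<and> star C \<U> = topspace X))"

definition selectively_strongly_star_Menger :: "'a topology \<Rightarrow> bool" where
  "selectively_strongly_star_Menger X \<longleftrightarrow>
     (\<forall>\<U> :: nat \<Rightarrow> 'a set set. \<forall>D :: nat \<Rightarrow> 'a set.
        (\<forall>n. open_cover X (\<U> n)) \<and> (\<forall>n. dense_in X (D n)) \<longrightarrow>
        (\<exists>F :: nat \<Rightarrow> 'a set. (\<forall>n. finite (F n) \<and> F n \<subseteq> D n) \<and>
              (\<Union>n. star (F n) (\<U> n)) = topspace X))"

definition dominating_family :: "(nat \<Rightarrow> nat) set \<Rightarrow> bool" where
  "dominating_family F \<longleftrightarrow> (\<forall>g. \<exists>f\<in>F. \<forall>\<^sub>F n in sequentially. g n \<le> f n)"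

text \<open>The cardinality of S is below the dominating number d, i.e. strictly
  below the cardinality of every dominating family.\<close>
definition card_less_dominating :: "'a set \<Rightarrow> bool" where
  "card_less_dominating S \<longleftrightarrow> (\<forall>F. dominating_family F \<longrightarrow> S \<prec> F)"

definition sigma_compact_in :: "'a topology \<Rightarrow> 'a set \<Rightarrow> bool" where
  "sigma_compact_in X Z \<longleftrightarrow> (\<exists>K :: nat \<Rightarrow> 'a set. (\<forall>n. compactin X (K n)) \<and> Z = (\<Union>n. K n))"

definition closed_discrete_in :: "'a topology \<Rightarrow> 'a set \<Rightarrow> bool" where
  "closed_discrete_in X Y \<longleftrightarrow> closedin X Y \<and>
     (\<forall>y\<in>Y. \<exists>U. openin X U \<and> U \<inter> Y = {y})"

end

theory Submission
  imports Defs
begin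

lemma compact_part:
  assumes K: "compactin X K" and U: "open_cover X \<U>" and D: "dense_in X D"
  shows "\<exists>F. finite F \<and> F \<subseteq> D \<and> K \<subseteq> star F \<U>"
proof -
  let ?V = "{U\<in>\<U>. U \<inter> D \<noteq> {}}"
  have KX: "K \<subseteq> topspace X" and KC: "\<And>\<W>. (\<forall>U \<in> \<W>. openin X U) \<and> K \<subseteq> \<Union>\<W>
          \<Longrightarrow> (\<exists>\<F>. finite \<F> \<and> \<F> \<subseteq> \<W> \<and> K \<subseteq> \<Union>\<F>)"
    using K unfolding compactin_def by auto
  have cov: "K \<subseteq> \<Union>?V"
  proof
    fix x assume "x \<in> K"
    then have "x \<in> \<Union>\<U>" using KX U unfolding open_cover_def by auto
    then obtain V where V: "V \<in> \<U>" "x \<in> V" by blast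
    then have "openin X V" using U unfolding open_cover_def by auto
    then have "D \<inter> V \<noteq> {}" using D V(2) unfolding dense_in_def dense_intersects_open by blast
    then show "x \<in> \<Union>?V" using V by blast
  qed
  have "\<forall>V\<in>?V. openin X V" using U unfolding open_cover_def by auto
  then obtain \<F> where F: "finite \<F>" "\<F> \<subseteq> ?V" "K \<subseteq> \<Union>\<F>"
    using KC[of ?V] cov by blast
  define F where "F = (\<lambda>V. SOME d. d \<in> V \<inter> D) ` \<F>"
  have pick: "(SOME d. d \<in> V \<inter> D) \<in> V \<inter> D" if "V \<in> \<F>" for V
    by (rule someI_ex) (use F(2) that in blast)
  have "finite F" using F(1) F_def by simp
  moreover have "F \<subseteq> D" using pick F_def by auto
  moreover have "K \<subseteq> star F \<U>"
  proof
    fix x assume "x \<in> K"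
    then obtain V where V: "V \<in> \<F>" "x \<in> V" using F(3) by blast
    then have "(SOME d. d \<in> V \<inter> D) \<in> V \<inter> F" using pick F_def by auto
    then show "x \<in> star F \<U>" unfolding star_def using V F(2) by blast
  qed
  ultimately show ?thesis by blast
qed

theorem mainTheorem6:
  fixes X :: "'a topology" and Y Z :: "'a set"
  assumes "regular_space X" and "t1_space X"
    and "topspace X = Y \<union> Z" and "Y \<inter> Z = {}"
    and "sigma_compact_in X Z"
    and "closed_discrete_in X Y"
    and "absolutely_strongly_star_Lindelof X"
    and "card_less_dominating Y"
  shows "selectively_strongly_star_Menger X"
  unfolding selectively_strongly_star_Menger_def
proof (intro allI impI)
  fix \<U> :: "nat \<Rightarrow> 'a set set" and D :: "nat \<Rightarrow> 'a set"
  assume H: "(\<forall>n. open_cover X (\<U> n)) \<and> (\<forall>n. dense_in X (D n))"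
  obtain K :: "nat \<Rightarrow> 'a set" where K: "\<And>n. compactin X (K n)" "Z = (\<Union>n. K n)"
    using assms(5) unfolding sigma_compact_in_def by blast
  have "\<forall>m. \<exists>F. finite F \<and> F \<subseteq> D (2*m) \<and> K m \<subseteq> star F (\<U> (2*m))"
    using compact_part K(1) H by blast
  then obtain A where A: "\<And>m. finite (A m) \<and> A m \<subseteq> D (2*m) \<and> K m \<subseteq> star (A m) (\<U> (2*m))"
    by metis
  have "\<forall>m. \<exists>C. C \<subseteq> D (2*m+1) \<and> countable C \<and> star C (\<U> (2*m+1)) = topspace X"
    using assms(7) H unfolding absolutely_strongly_star_Lindelof_def by blast
  then obtain C where C: "\<And>m. C m \<subseteq> D (2*m+1) \<and> countable (C m) \<and> star (C m) (\<U> (2*m+1)) = topspace X"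
    by metis
  define c where "c m k = from_nat_into (C m) k" for m k
  define f where "f y m = (LEAST k. y \<in> star {c m k} (\<U> (2*m+1)))" for y m
  have ex: "\<exists>k. y \<in> star {c m k} (\<U> (2*m+1))" if "y \<in> topspace X" for y m
  proof -
    have "y \<in> star (C m) (\<U> (2*m+1))" using C that by auto
    then obtain V where V: "V \<in> \<U> (2*m+1)" "y \<in> V" "V \<inter> C m \<noteq> {}" unfolding star_def by blast
    then obtain d where d: "d \<in> V" "d \<in> C m" by blast
    then obtain k where "c m k = d" using C from_nat_into_surj c_def by metis
    then show ?thesis using V d unfolding star_def by blast
  qed
  have notdom: "\<not> dominating_family (f ` Y)"
  proof
    assume "dominating_family (f ` Y)"
    then have "Y \<prec> f ` Y" using assms(8) unfolding card_less_dominating_def by blast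
    then have "Y \<prec> Y" using image_lepoll lesspoll_trans2 by blast
    then show False using eqpoll_refl lesspoll_def by blast
  qed
  then obtain g where g: "\<And>y. y \<in> Y \<Longrightarrow> \<not> (\<forall>\<^sub>F m in sequentially. g m \<le> f y m)"
    unfolding dominating_family_def by blast
  define B where "B m = c m ` {..g m}" for m
  define F where "F n = (if even n then A (n div 2) else if C (n div 2) = {} then {} else B (n div 2))" for n
  show "\<exists>F. (\<forall>n. finite (F n) \<and> F n \<subseteq> D n) \<and> (\<Union>n. star (F n) (\<U> n)) = topspace X"
  proof (intro exI conjI allI)
    fix n
    show "finite (F n)" using A[of "n div 2"] by (simp add: F_def B_def)
    show "F n \<subseteq> D n"
    proof (cases "even n")
      case True
      then show ?thesis using A[of "n div 2"] F_def by auto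
    next
      case False
      then have n: "n = 2*(n div 2)+1" by presburger
      have BC: "B m \<subseteq> C m" if "C m \<noteq> {}" for m
        unfolding B_def c_def using from_nat_into[OF that] by auto
      have "C (n div 2) \<subseteq> D (2*(n div 2)+1)" using C by blast
      moreover have "D (2*(n div 2)+1) = D n" using arg_cong[where f=D, OF n[symmetric]] .
      ultimately have "C (n div 2) \<subseteq> D n" by simp
      show ?thesis
      proof (cases "C (n div 2) = {}")
        case True
        then show ?thesis using False by (simp add: F_def)
      next
        case Ne: False
        then have "F n = B (n div 2)" using False by (simp add: F_def)
        then show ?thesis using BC[OF Ne] \<open>C (n div 2) \<subseteq> D n\<close> by blast
      qed
    qed
  next
    have sub: "star (F n) (\<U> n) \<subseteq> topspace X" for n
    proof -
      have "\<Union>(\<U> n) = topspace X" using H unfolding open_cover_def by blast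
      then show ?thesis unfolding star_def by blast
    qed
    have "topspace X \<subseteq> (\<Union>n. star (F n) (\<U> n))"
    proof
      fix x assume x: "x \<in> topspace X"
      show "x \<in> (\<Union>n. star (F n) (\<U> n))"
      proof (cases "x \<in> Z")
        case True
        then obtain m where "x \<in> K m" using K(2) by blast
        moreover have "F (2*m) = A m" by (simp add: F_def)
        ultimately have "x \<in> star (F (2*m)) (\<U> (2*m))" using A[of m] by auto
        then show ?thesis by blast
      next
        case False
        then have y: "x \<in> Y" using x assms(3) by blast
        have "\<exists>\<^sub>F m in sequentially. \<not> g m \<le> f x m" using g[OF y] by (simp only: not_eventually)
        then obtain m where "\<not> g m \<le> f x m" by (meson frequently_ex)
        then have m: "f x m < g m" by simp
        have fx: "x \<in> star {c m (f x m)} (\<U> (2*m+1))"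
          unfolding f_def using LeastI_ex[OF ex[OF x]] .
        have Cne: "C m \<noteq> {}"
        proof
          assume "C m = {}"
          then show False using C[of m] x unfolding star_def by auto
        qed
        have "{c m (f x m)} \<subseteq> B m" unfolding B_def using m by auto
        then have "x \<in> star (B m) (\<U> (2*m+1))" using fx unfolding star_def by blast
        moreover have "F (2*m+1) = B m" unfolding F_def using Cne by simp
        ultimately show ?thesis by (metis UN_I UNIV_I)
      qed
    qed
    then show "(\<Union>n. star (F n) (\<U> n)) = topspace X" using sub by blast
  qed
qed

end
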